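(* Let $V$ be a Whittaker module of type $\eta$ over $R$ with cyclic Whittaker vector $w$, and suppose $Z_V=(p(\Omega)^n)$ where $p$ is an irreducible polynomial and $n\ge1$. Then $V$ has a unique maximal submodule, namely $V_1=Rp(\Omega)w$.
   Context: Let $f\in\mathbb{C}[H]$ be a polynomial. $R=R(f)$ is the associative $\mathbb{C}$-algebra generated by $E,F,H$ with relations $EF-FE=f(H)$, $HE-EH=E$, $HF-FH=-F$. Let $u\in\mathbb{C}[H]$ satisfy $f(H)=\tfrac12(u(H+1)-u(H))$ and $\Omega=2FE+u(H+1)$; the center $Z(R)$ is the polynomial ring $\mathbb{C}[\Omega]$. Let $R(E)=\mathbb{C}[E]$ and fix an algebra homomorphism $\eta:R(E)\to\mathbb{C}$ with $\eta(E)\neq0$. A vector $v$ of an $R$-module $V$ is a Whittaker vector of type $\eta$ if $Ev=\eta(E)v$; $V$ is a Whittaker module of type $\eta$ with cyclic Whittaker vector $w$ if $w$ is a Whittaker vector and $V=Rw$. $Z_V=\mathrm{Ann}_R(V)\cap Z(R)$. *)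

theory Defs
  imports Complex_Main "HOL-Computational_Algebra.Polynomial"
begin

text \<open>An R(f)-module is modelled as a complex vector space (carrier type 'v with
  scalar multiplication sc) together with three linear operators E, F, H satisfying
  the defining relations of R(f).\<close>

definition op_poly :: "(complex \<Rightarrow> 'v::ab_group_add \<Rightarrow> 'v) \<Rightarrow> complex poly \<Rightarrow> ('v \<Rightarrow> 'v) \<Rightarrow> 'v \<Rightarrow> 'v" where
  "op_poly sc q T v = (\<Sum>i\<le>degree q. sc (coeff q i) ((T ^^ i) v))"

definition R_module :: "(complex \<Rightarrow> 'v::ab_group_add \<Rightarrow> 'v) \<Rightarrow> complex poly
    \<Rightarrow> ('v \<Rightarrow> 'v) \<Rightarrow> ('v \<Rightarrow> 'v) \<Rightarrow> ('v \<Rightarrow> 'v) \<Rightarrow> bool" where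
  "R_module sc f E F H \<longleftrightarrow> vector_space sc
     \<and> Vector_Spaces.linear sc sc E \<and> Vector_Spaces.linear sc sc F \<and> Vector_Spaces.linear sc sc H
     \<and> (\<forall>v. E (F v) - F (E v) = op_poly sc f H v)
     \<and> (\<forall>v. H (E v) - E (H v) = E v)
     \<and> (\<forall>v. H (F v) - F (H v) = - F v)"

definition Omega_op :: "(complex \<Rightarrow> 'v::ab_group_add \<Rightarrow> 'v) \<Rightarrow> complex poly
    \<Rightarrow> ('v \<Rightarrow> 'v) \<Rightarrow> ('v \<Rightarrow> 'v) \<Rightarrow> ('v \<Rightarrow> 'v) \<Rightarrow> 'v \<Rightarrow> 'v" where
  "Omega_op sc u E F H v = sc 2 (F (E v)) + op_poly sc u (\<lambda>x. H x + x) v"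

definition submodule :: "(complex \<Rightarrow> 'v::ab_group_add \<Rightarrow> 'v)
    \<Rightarrow> ('v \<Rightarrow> 'v) \<Rightarrow> ('v \<Rightarrow> 'v) \<Rightarrow> ('v \<Rightarrow> 'v) \<Rightarrow> 'v set \<Rightarrow> bool" where
  "submodule sc E F H W \<longleftrightarrow> module.subspace sc W
     \<and> (\<forall>v\<in>W. E v \<in> W) \<and> (\<forall>v\<in>W. F v \<in> W) \<and> (\<forall>v\<in>W. H v \<in> W)"

definition gen_submodule :: "(complex \<Rightarrow> 'v::ab_group_add \<Rightarrow> 'v)
    \<Rightarrow> ('v \<Rightarrow> 'v) \<Rightarrow> ('v \<Rightarrow> 'v) \<Rightarrow> ('v \<Rightarrow> 'v) \<Rightarrow> 'v set \<Rightarrow> 'v set" where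
  "gen_submodule sc E F H S = \<Inter>{W. submodule sc E F H W \<and> S \<subseteq> W}"

definition maximal_submodule :: "(complex \<Rightarrow> 'v::ab_group_add \<Rightarrow> 'v)
    \<Rightarrow> ('v \<Rightarrow> 'v) \<Rightarrow> ('v \<Rightarrow> 'v) \<Rightarrow> ('v \<Rightarrow> 'v) \<Rightarrow> 'v set \<Rightarrow> bool" where
  "maximal_submodule sc E F H W \<longleftrightarrow> submodule sc E F H W \<and> W \<noteq> UNIV
     \<and> (\<forall>W'. submodule sc E F H W' \<and> W \<subseteq> W' \<longrightarrow> W' = W \<or> W' = UNIV)"

text \<open>Whittaker module of type \<eta> (with \<eta>(E) = c) and cyclic Whittaker vector w.\<close>
definition whittaker_module :: "(complex \<Rightarrow> 'v::ab_group_add \<Rightarrow> 'v)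
    \<Rightarrow> ('v \<Rightarrow> 'v) \<Rightarrow> ('v \<Rightarrow> 'v) \<Rightarrow> ('v \<Rightarrow> 'v) \<Rightarrow> complex \<Rightarrow> 'v \<Rightarrow> bool" where
  "whittaker_module sc E F H c w \<longleftrightarrow> E w = sc c w \<and> gen_submodule sc E F H {w} = UNIV"

text \<open>Z_V = Ann_R(V) \<inter> Z(R), with Z(R) = C[\<Omega>]: polynomials q with q(\<Omega>) acting as 0.\<close>
definition Z_V :: "(complex \<Rightarrow> 'v::ab_group_add \<Rightarrow> 'v) \<Rightarrow> complex poly
    \<Rightarrow> ('v \<Rightarrow> 'v) \<Rightarrow> ('v \<Rightarrow> 'v) \<Rightarrow> ('v \<Rightarrow> 'v) \<Rightarrow> complex poly set" where
  "Z_V sc u E F H = {q. \<forall>v. op_poly sc q (Omega_op sc u E F H) v = 0}"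

end

theory Submission
  imports Defs "HOL-Computational_Algebra.Fundamental_Theorem_Algebra"
begin



definition lin :: "(complex \<Rightarrow> 'v::ab_group_add \<Rightarrow> 'v) \<Rightarrow> ('v \<Rightarrow> 'v) \<Rightarrow> bool" where
  "lin sc T \<longleftrightarrow> (\<forall>x y. T (x + y) = T x + T y) \<and> (\<forall>a x. T (sc a x) = sc a (T x))"

locale cvs = vector_space sc for sc :: "complex \<Rightarrow> 'v::ab_group_add \<Rightarrow> 'v"
begin

lemma lin_add: "lin sc T \<Longrightarrow> T (x + y) = T x + T y" by (simp add: lin_def)
lemma lin_scale: "lin sc T \<Longrightarrow> T (sc a x) = sc a (T x)" by (simp add: lin_def)
lemma lin_zero: "lin sc T \<Longrightarrow> T 0 = 0"
  using lin_scale[of T 0 0] by simp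
lemma lin_minus: "lin sc T \<Longrightarrow> T (- x) = - T x"
  using lin_scale[of T "-1" x] by simp
lemma lin_diff: "lin sc T \<Longrightarrow> T (x - y) = T x - T y"
  using lin_add[of T x "-y"] lin_minus[of T y] by simp
lemma lin_sum: "lin sc T \<Longrightarrow> T (sum g A) = (\<Sum>i\<in>A. T (g i))"
  by (induction A rule: infinite_finite_induct) (auto simp: lin_zero lin_add)
lemma lin_funpow: "lin sc T \<Longrightarrow> lin sc (T ^^ k)"
  by (induction k) (auto simp: lin_def)

lemma op_poly_N: assumes "degree q \<le> N"
  shows "op_poly sc q T v = (\<Sum>i\<le>N. sc (coeff q i) ((T ^^ i) v))"
proof -
  have "(\<Sum>i\<le>N. sc (coeff q i) ((T ^^ i) v)) = (\<Sum>i\<le>degree q. sc (coeff q i) ((T ^^ i) v))"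
    by (rule sum.mono_neutral_right) (use assms in \<open>auto simp: coeff_eq_0\<close>)
  thus ?thesis by (simp add: op_poly_def)
qed

lemma op_poly_add: "op_poly sc (p + q) T v = op_poly sc p T v + op_poly sc q T v"
proof -
  let ?N = "max (degree p) (degree q)"
  have "degree (p + q) \<le> ?N" by (rule degree_add_le) auto
  thus ?thesis
    by (simp add: op_poly_N[of _ ?N] sum.distrib[symmetric] scale_left_distrib)
qed

lemma op_poly_smult: "op_poly sc (smult a p) T v = sc a (op_poly sc p T v)"
  by (simp add: op_poly_N[of _ "degree p"] scale_sum_right)

lemma op_poly_0[simp]: "op_poly sc 0 T v = 0"
  by (simp add: op_poly_def)

lemma op_poly_minus: "op_poly sc (- p) T v = - op_poly sc p T v"
  using op_poly_smult[of "-1" p T v] by simp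

lemma op_poly_diff: "op_poly sc (p - q) T v = op_poly sc p T v - op_poly sc q T v"
  using op_poly_add[of p "-q" T v] op_poly_minus[of q T v] by simp

lemma op_poly_const[simp]: "op_poly sc [:a:] T v = sc a v"
  by (simp add: op_poly_def)

lemma op_poly_pCons: assumes "lin sc T"
  shows "op_poly sc (pCons a q) T v = sc a v + T (op_poly sc q T v)"
proof -
  let ?N = "degree q"
  have d: "degree (pCons a q) \<le> Suc ?N" by simp
  have "op_poly sc (pCons a q) T v = (\<Sum>i\<le>Suc ?N. sc (coeff (pCons a q) i) ((T ^^ i) v))"
    by (rule op_poly_N[OF d])
  also have "\<dots> = sc a v + (\<Sum>i\<le>?N. sc (coeff q i) ((T ^^ Suc i) v))"
    by (subst sum.atMost_Suc_shift) simp
  also have "(\<Sum>i\<le>?N. sc (coeff q i) ((T ^^ Suc i) v)) = T (op_poly sc q T v)"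
    by (simp add: op_poly_def lin_sum[OF assms] lin_scale[OF assms])
  finally show ?thesis .
qed

lemma op_poly_lin: assumes "lin sc T" shows "lin sc (op_poly sc q T)"
  unfolding lin_def op_poly_def
  by (auto simp: lin_add[OF lin_funpow[OF assms]] lin_scale[OF lin_funpow[OF assms]]
       scale_right_distrib sum.distrib scale_sum_right scale_left_commute mult.commute)

lemma op_poly_mult: assumes "lin sc T"
  shows "op_poly sc (p * q) T v = op_poly sc p T (op_poly sc q T v)"
proof (induction p arbitrary: v)
  case 0 thus ?case by simp
next
  case (pCons a p)
  have "pCons a p * q = smult a q + pCons 0 (p * q)" by simp
  thus ?case using pCons
    by (simp add: op_poly_add op_poly_smult op_poly_pCons[OF assms])
qed

lemma op_poly_intertwine: assumes "lin sc A" "lin sc B" "lin sc C" "\<And>v. A (B v) = C (A v)"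
  shows "A (op_poly sc q B v) = op_poly sc q C (A v)"
proof (induction q arbitrary: v)
  case 0 thus ?case using lin_zero[OF assms(1)] by simp
next
  case (pCons a q)
  thus ?case using assms
    by (simp add: op_poly_pCons lin_add lin_scale)
qed

lemma op_poly_pcompose: assumes "lin sc T"
  shows "op_poly sc (pcompose g q) T v = op_poly sc g (op_poly sc q T) v"
proof (induction g arbitrary: v)
  case 0 thus ?case by simp
next
  case (pCons a g)
  thus ?case
    by (simp add: pcompose_pCons op_poly_add op_poly_mult[OF assms]
         op_poly_pCons[OF op_poly_lin[OF assms]])
qed

lemma op_poly_one[simp]: "op_poly sc 1 T v = v"
  using op_poly_const[of 1 T v] by (simp add: one_pCons)

lemma op_poly_linear: "op_poly sc [:a, b:] T = (\<lambda>y. sc a y + sc b (T y))"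
  by (rule ext) (simp add: op_poly_def)

lemma op_poly_power: assumes "lin sc T"
  shows "op_poly sc (p ^ n) T v = (op_poly sc p T ^^ n) v"
  by (induction n arbitrary: v) (simp_all add: op_poly_mult[OF assms])

lemma op_poly_closed: assumes "subspace S" "\<And>x. x \<in> S \<Longrightarrow> T x \<in> S" "lin sc T" "v \<in> S"
  shows "op_poly sc q T v \<in> S"
proof (induction q)
  case 0 thus ?case using subspace_0[OF assms(1)] by simp
next
  case (pCons a q)
  thus ?case using assms by (simp add: op_poly_pCons subspace_add subspace_scale)
qed

end



lemma shift_ne:
  fixes g :: "complex poly"
  assumes "degree g > 0" shows "pcompose g [:-1, 1:] \<noteq> g"
proof
  assume eq: "pcompose g [:-1, 1:] = g"
  have sh: "poly g (x - 1) = poly g x" for x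
    using arg_cong[OF eq, of "\<lambda>p. poly p x"] by (simp add: poly_pcompose)
  have k: "poly g (- of_nat k) = poly g 0" for k
  proof (induction k)
    case (Suc k)
    have e: "- (of_nat (Suc k) :: complex) = - of_nat k - 1" by simp
    show ?case unfolding e using sh[of "- of_nat k"] Suc by (simp only:)
  qed simp
  define h where "h = g - [:poly g 0:]"
  have "range (\<lambda>k::nat. - (of_nat k :: complex)) \<subseteq> {x. poly h x = 0}"
    using k by (auto simp: h_def)
  moreover have "infinite (range (\<lambda>k::nat. - (of_nat k :: complex)))"
    by (rule range_inj_infinite) (auto simp: inj_def)
  ultimately have "h = 0" using poly_roots_finite[of h] finite_subset by blast
  hence "g = [:poly g 0:]" by (simp add: h_def)
  hence "degree g = 0" by (metis degree_pCons_0)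
  thus False using assms by simp
qed

lemma shift_deg_less:
  fixes g :: "complex poly"
  assumes "degree g > 0" shows "degree (pcompose g [:-1, 1:] - g) < degree g"
proof -
  have dc: "degree (pcompose g [:-1, 1:]) = degree g" by (simp add: degree_pcompose)
  have lc: "lead_coeff (pcompose g [:-1, 1:]) = lead_coeff g" by (simp add: lead_coeff_comp)
  have "degree (pcompose g [:-1, 1:] - g) \<le> degree g - 1"
  proof (rule degree_le, intro allI impI)
    fix i assume "degree g - 1 < i"
    hence "i = degree g \<or> i > degree g" using assms by auto
    thus "coeff (pcompose g [:-1, 1:] - g) i = 0"
      using lc dc by (auto simp: coeff_eq_0)
  qed
  thus ?thesis using assms by simp
qed

lemma shift_closed_const:
  fixes J :: "complex poly set"
  assumes diff: "\<And>p q. p \<in> J \<Longrightarrow> q \<in> J \<Longrightarrow> p - q \<in> J"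
    and sh: "\<And>p. p \<in> J \<Longrightarrow> pcompose p [:-1, 1:] \<in> J"
    and g: "g \<in> J" "g \<noteq> 0"
  shows "\<exists>a. a \<noteq> 0 \<and> [:a:] \<in> J"
  using g
proof (induction "degree g" arbitrary: g rule: less_induct)
  case less
  show ?case
  proof (cases "degree g = 0")
    case True
    then obtain a where "g = [:a:]" by (metis degree_eq_zeroE)
    thus ?thesis using less by auto
  next
    case False
    let ?h = "pcompose g [:-1, 1:] - g"
    have "?h \<in> J" using less diff sh by blast
    moreover have "?h \<noteq> 0" using shift_ne[of g] False by simp
    moreover have "degree ?h < degree g" using shift_deg_less[of g] False by simp
    ultimately show ?thesis using less by blast
  qed
qed

lemma irreducible_linear:
  fixes p :: "complex poly"
  assumes "irreducible p"
  shows "\<exists>z r. r \<noteq> 0 \<and> p = [:-z, 1:] * [:r:]"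
proof -
  have "p \<noteq> 0" "\<not> p dvd 1" using assms by (auto simp: irreducible_def)
  hence "degree p \<noteq> 0" by (metis is_unit_iff_degree)
  hence "\<not> constant (poly p)" by (simp add: constant_degree)
  then obtain z where "poly p z = 0" using fundamental_theorem_of_algebra by blast
  then obtain r where pr: "p = [:-z, 1:] * r" by (metis poly_eq_0_iff_dvd dvdE)
  have "\<not> [:-z, 1:] dvd 1" by (metis is_unit_iff_degree degree_pCons_eq_if one_neq_zero pCons_eq_0_iff nat.distinct(1) degree_1 pCons_one)
  hence "r dvd 1" using irreducibleD[OF assms pr] by blast
  then obtain c where "r = [:c:]" "c dvd 1" using is_unit_poly_iff by blast
  thus ?thesis using pr by auto
qed




lemma (in cvs) lin_plus_id: "lin sc K \<Longrightarrow> lin sc (\<lambda>y. K y + y)"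
  by (simp add: lin_def scale_right_distrib algebra_simps)

lemma (in cvs) lin_Omega: "lin sc E \<Longrightarrow> lin sc F \<Longrightarrow> lin sc H \<Longrightarrow> lin sc (Omega_op sc u E F H)"
  unfolding Omega_op_def using op_poly_lin[OF lin_plus_id[of H]]
  by (simp add: lin_def scale_right_distrib scale_left_commute algebra_simps)

locale wm = cvs sc for sc :: "complex \<Rightarrow> 'v::ab_group_add \<Rightarrow> 'v" +
  fixes f u :: "complex poly" and E F H :: "'v \<Rightarrow> 'v" and c :: complex and w :: 'v
  assumes linE: "lin sc E" and linF: "lin sc F" and linH: "lin sc H"
  and EF: "\<And>v. E (F v) = F (E v) + op_poly sc f H v"
  and HE: "\<And>v. H (E v) = E (H v) + E v"
  and HF: "\<And>v. H (F v) = F (H v) - F v"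
  and fu: "f = smult (1/2) (pcompose u [:1,1:] - u)"
  and cnz: "c \<noteq> 0" and Ew: "E w = sc c w"
  and gen: "\<And>S. submodule sc E F H S \<Longrightarrow> w \<in> S \<Longrightarrow> S = UNIV"
begin

abbreviation "Om \<equiv> Omega_op sc u E F H"

lemma linHp: "lin sc (\<lambda>y. H y + y)" by (rule lin_plus_id[OF linH])
lemma linHpp: "lin sc (\<lambda>y. (H y + y) + y)" by (rule lin_plus_id[OF linHp])
lemma linOm: "lin sc Om" by (rule lin_Omega[OF linE linF linH])

lemma L1: assumes "lin sc K"
  shows "sc 2 (op_poly sc f K x) + op_poly sc u K x = op_poly sc u (\<lambda>y. K y + y) x"
proof -
  have e: "op_poly sc [:1, 1:] K = (\<lambda>y. K y + y)"
    by (simp add: op_poly_linear add.commute)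
  have "op_poly sc f K x = sc (1/2) (op_poly sc u (\<lambda>y. K y + y) x - op_poly sc u K x)"
    by (simp add: fu op_poly_smult op_poly_diff op_poly_pcompose[OF assms] e)
  hence "sc 2 (op_poly sc f K x) = op_poly sc u (\<lambda>y. K y + y) x - op_poly sc u K x"
    by simp
  thus ?thesis by (simp add: algebra_simps)
qed

lemma E_Hp: "E (H v + v) = H (E v)"
  by (simp add: HE lin_add[OF linE])
lemma F_H: "F (H v) = H (F v) + F v"
  by (simp add: HF)
lemma F_Hp: "F (H v + v) = (H (F v) + F v) + F v"
  by (simp add: HF lin_add[OF linF])

lemma E_poly: "E (op_poly sc g (\<lambda>y. H y + y) v) = op_poly sc g H (E v)"
  using op_poly_intertwine[of E "\<lambda>y. H y + y" H, OF linE linHp linH] E_Hp by blast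
lemma F_poly: "F (op_poly sc g H v) = op_poly sc g (\<lambda>y. H y + y) (F v)"
  using op_poly_intertwine[of F H "\<lambda>y. H y + y", OF linF linH linHp] F_H by blast
lemma F_polyp: "F (op_poly sc g (\<lambda>y. H y + y) v) = op_poly sc g (\<lambda>y. (H y + y) + y) (F v)"
  using op_poly_intertwine[of F "\<lambda>y. H y + y" "\<lambda>y. (H y + y) + y", OF linF linHp linHpp] F_Hp by blast
lemma H_polyp: "H (op_poly sc g (\<lambda>y. H y + y) v) = op_poly sc g (\<lambda>y. H y + y) (H v)"
  using op_poly_intertwine[of H "\<lambda>y. H y + y" "\<lambda>y. H y + y", OF linH linHp linHp] by (simp add: lin_add[OF linH])

lemma H_FE: "H (F (E v)) = F (E (H v))"
  by (simp add: HF HE lin_add[OF linF])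

lemma Om_E: "E (Om v) = Om (E v)"
proof -
  have "E (Om v) = sc 2 (E (F (E v))) + op_poly sc u H (E v)"
    by (simp add: Omega_op_def lin_add[OF linE] lin_scale[OF linE] E_poly)
  also have "\<dots> = sc 2 (F (E (E v))) + (sc 2 (op_poly sc f H (E v)) + op_poly sc u H (E v))"
    by (simp add: EF scale_right_distrib add.assoc)
  also have "\<dots> = Om (E v)" by (simp add: L1[OF linH] Omega_op_def)
  finally show ?thesis .
qed

lemma Om_F: "F (Om v) = Om (F v)"
proof -
  have "F (Om v) = sc 2 (F (F (E v))) + op_poly sc u (\<lambda>y. (H y + y) + y) (F v)"
    by (simp add: Omega_op_def lin_add[OF linF] lin_scale[OF linF] F_polyp)
  also have "\<dots> = sc 2 (F (F (E v))) + (sc 2 (op_poly sc f (\<lambda>y. H y + y) (F v)) + op_poly sc u (\<lambda>y. H y + y) (F v))"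
    by (simp add: L1[OF linHp])
  also have "\<dots> = Om (F v)"
    by (simp add: Omega_op_def EF lin_add[OF linF] F_poly scale_right_distrib add.assoc)
  finally show ?thesis .
qed

lemma Om_H: "H (Om v) = Om (H v)"
  by (simp add: Omega_op_def lin_add[OF linH] lin_scale[OF linH] H_polyp H_FE)

end



context wm begin

lemma linHm: "lin sc (\<lambda>y. H y - y)"
  by (simp add: lin_def lin_add[OF linH] lin_scale[OF linH] scale_right_diff_distrib)

lemma E_H: "E (H v) = H (E v) - E v" by (simp add: HE)

lemma E_gw: "E (op_poly sc g H w) = sc c (op_poly sc (pcompose g [:-1, 1:]) H w)"
proof -
  have "E (op_poly sc g H w) = op_poly sc g (\<lambda>y. H y - y) (E w)"
    using op_poly_intertwine[of E H "\<lambda>y. H y - y", OF linE linH linHm] E_H by blast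
  also have "\<dots> = sc c (op_poly sc g (\<lambda>y. H y - y) w)"
    by (simp add: Ew lin_scale[OF op_poly_lin[OF linHm]])
  also have "op_poly sc [:-1, 1:] H = (\<lambda>y. H y - y)"
    by (simp add: op_poly_linear)
  hence "op_poly sc g (\<lambda>y. H y - y) w = op_poly sc (pcompose g [:-1, 1:]) H w"
    by (simp add: op_poly_pcompose[OF linH])
  finally show ?thesis .
qed

lemma sub_Om: assumes "submodule sc E F H S" "x \<in> S" shows "Om x \<in> S"
proof -
  have s: "subspace S" using assms(1) by (simp add: submodule_def)
  have H': "\<And>y. y \<in> S \<Longrightarrow> H y + y \<in> S" using assms(1) s subspace_add by (auto simp: submodule_def)
  have "F (E x) \<in> S" using assms by (auto simp: submodule_def)
  moreover have "op_poly sc u (\<lambda>y. H y + y) x \<in> S" by (rule op_poly_closed[OF s H' linHp assms(2)])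
  ultimately show ?thesis unfolding Omega_op_def using s subspace_add subspace_scale by blast
qed

end

locale wm2 = wm +
  fixes p :: "complex poly" and n :: nat and z r :: complex
  assumes pz: "p = [:-z, 1:] * [:r:]" and rnz: "r \<noteq> 0"
  and nil: "\<And>v. op_poly sc (p ^ n) Om v = 0"
  and nontriv: "\<exists>v. sc 1 v \<noteq> 0"
begin

abbreviation "T \<equiv> op_poly sc p Om"
abbreviation "U \<equiv> range T"

lemma linT: "lin sc T" by (rule op_poly_lin[OF linOm])

lemma T_E: "E (T v) = T (E v)"
  using op_poly_intertwine[of E Om Om, OF linE linOm linOm] Om_E by blast
lemma T_F: "F (T v) = T (F v)"
  using op_poly_intertwine[of F Om Om, OF linF linOm linOm] Om_F by blast
lemma T_H: "H (T v) = T (H v)"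
  using op_poly_intertwine[of H Om Om, OF linH linOm linOm] Om_H by blast

lemma T_pow: "(T ^^ n) v = 0"
  using nil[of v] op_poly_power[OF linOm, of p n v] by simp

lemma sub_T: assumes "submodule sc E F H S" "x \<in> S" shows "T x \<in> S"
proof -
  have s: "subspace S" using assms(1) by (simp add: submodule_def)
  show ?thesis by (rule op_poly_closed[OF s sub_Om[OF assms(1)] linOm assms(2)])
qed

lemma U_sub: "submodule sc E F H U"
proof -
  have "subspace U"
    unfolding subspace_def
  proof (intro conjI ballI allI)
    show "0 \<in> U" using lin_zero[OF linT] by (metis rangeI)
    fix x y assume "x \<in> U" "y \<in> U"
    then obtain a b where "x = T a" "y = T b" by blast
    thus "x + y \<in> U" using lin_add[OF linT, of a b] by (metis rangeI)
  next
    fix k x assume "x \<in> U"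
    then obtain a where "x = T a" by blast
    thus "sc k x \<in> U" using lin_scale[OF linT, of k a] by (metis rangeI)
  qed
  moreover have "\<forall>v\<in>U. E v \<in> U"
  proof
    fix v assume "v \<in> U" then obtain a where "v = T a" by blast
    thus "E v \<in> U" using T_E[of a] by (metis rangeI)
  qed
  moreover have "\<forall>v\<in>U. F v \<in> U"
  proof
    fix v assume "v \<in> U" then obtain a where "v = T a" by blast
    thus "F v \<in> U" using T_F[of a] by (metis rangeI)
  qed
  moreover have "\<forall>v\<in>U. H v \<in> U"
  proof
    fix v assume "v \<in> U" then obtain a where "v = T a" by blast
    thus "H v \<in> U" using T_H[of a] by (metis rangeI)
  qed
  ultimately show ?thesis unfolding submodule_def by blast
qed

lemma U_sub': "subspace U" using U_sub unfolding submodule_def by blast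

lemma U_ne: "U \<noteq> UNIV"
proof
  assume a: "U = UNIV"
  have ex: "range (T ^^ k) = UNIV" for k
  proof (induction k)
    case 0 show ?case by simp
  next
    case (Suc k)
    show ?case
    proof (rule set_eqI, rule iffI)
      fix v
      obtain y where "v = T y" using a by (metis UNIV_I rangeE)
      moreover obtain y' where "y = (T ^^ k) y'" using Suc by (metis UNIV_I rangeE)
      ultimately show "v \<in> range (T ^^ Suc k)" by (metis comp_apply funpow.simps(2) rangeI)
    qed simp
  qed
  have "range (T ^^ n) = {0}" using T_pow by auto
  moreover obtain v0 where "sc 1 v0 \<noteq> 0" using nontriv by blast
  moreover have "v0 \<in> range (T ^^ n)" using ex[of n] by simp
  ultimately show False by auto
qed

lemma preimage_sub: assumes S: "submodule sc E F H S"
  shows "submodule sc E F H {v. T v \<in> S}"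
proof -
  have ss: "subspace S" using S by (simp add: submodule_def)
  have "subspace {v. T v \<in> S}"
    unfolding subspace_def
  proof (intro conjI ballI allI)
    show "0 \<in> {v. T v \<in> S}" using subspace_0[OF ss] lin_zero[OF linT] by simp
    fix x y assume "x \<in> {v. T v \<in> S}" "y \<in> {v. T v \<in> S}"
    thus "x + y \<in> {v. T v \<in> S}" using subspace_add[OF ss] lin_add[OF linT] by simp
  next
    fix k x assume "x \<in> {v. T v \<in> S}"
    thus "sc k x \<in> {v. T v \<in> S}" using subspace_scale[OF ss] lin_scale[OF linT] by simp
  qed
  moreover have "\<forall>v\<in>{v. T v \<in> S}. E v \<in> {v. T v \<in> S}"
    using S unfolding submodule_def by (simp add: T_E[symmetric])
  moreover have "\<forall>v\<in>{v. T v \<in> S}. F v \<in> {v. T v \<in> S}"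
    using S unfolding submodule_def by (simp add: T_F[symmetric])
  moreover have "\<forall>v\<in>{v. T v \<in> S}. H v \<in> {v. T v \<in> S}"
    using S unfolding submodule_def by (simp add: T_H[symmetric])
  ultimately show ?thesis by (simp add: submodule_def)
qed

lemma gen_T: "gen_submodule sc E F H {T w} = U"
proof
  show "gen_submodule sc E F H {T w} \<subseteq> U"
    unfolding gen_submodule_def using U_sub by blast
next
  show "U \<subseteq> gen_submodule sc E F H {T w}"
    unfolding gen_submodule_def
  proof (rule Inter_greatest)
    fix S assume "S \<in> {W. submodule sc E F H W \<and> {T w} \<subseteq> W}"
    hence S: "submodule sc E F H S" "T w \<in> S" by auto
    have "{v. T v \<in> S} = UNIV" using gen[OF preimage_sub[OF S(1)]] S(2) by simp
    thus "U \<subseteq> S" by blast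
  qed
qed

lemma Om_mod: "Om v - sc z v = T (sc (1/r) v)"
proof -
  have a: "T (sc (1/r) v) = op_poly sc [:-z, 1:] Om (op_poly sc [:r:] Om (sc (1/r) v))"
    unfolding pz by (rule op_poly_mult[OF linOm])
  have b: "op_poly sc [:r:] Om (sc (1/r) v) = v" using rnz by simp
  have "T (sc (1/r) v) = Om v - sc z v" unfolding a b
    by (simp add: op_poly_linear)
  thus ?thesis by simp
qed

lemma Om_modU: "Om v - sc z v \<in> U" using Om_mod by simp

definition "rr = smult (1/(2*c)) ([:z:] - pcompose u [:1,1:])"

lemma G_eq: "op_poly sc (pcompose g [:1,1:]) H x = op_poly sc g (\<lambda>y. H y + y) x"
proof -
  have e: "op_poly sc [:1, 1:] H = (\<lambda>y. H y + y)"
    by (simp add: op_poly_linear add.commute)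
  show ?thesis by (simp add: op_poly_pcompose[OF linH] e)
qed

lemma Fw: "F w - op_poly sc rr H w \<in> U"
proof -
  let ?G = "op_poly sc u (\<lambda>y. H y + y) w"
  have r: "op_poly sc rr H w = sc (1/(2*c)) (sc z w - ?G)"
    by (simp add: rr_def op_poly_smult op_poly_diff G_eq)
  have o: "Om w = sc (2*c) (F w) + ?G"
    by (simp add: Omega_op_def Ew lin_scale[OF linF])
  have "F w - op_poly sc rr H w = sc (1/(2*c)) (Om w - sc z w)"
    using cnz by (simp add: r o scale_right_diff_distrib scale_right_distrib)
  thus ?thesis using Om_modU subspace_scale[OF U_sub'] by simp
qed

lemma Cmod: "\<exists>g. v - op_poly sc g H w \<in> U"
proof -
  let ?M = "{v. \<exists>g. v - op_poly sc g H w \<in> U}"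
  have HU: "\<And>y. y \<in> U \<Longrightarrow> H y + y \<in> U" using U_sub subspace_add U_sub' by (auto simp: submodule_def)
  have "subspace ?M"
    unfolding subspace_def
  proof (intro conjI ballI allI)
    show "0 \<in> ?M" using subspace_0[OF U_sub'] by (auto intro: exI[of _ 0])
    fix x y assume "x \<in> ?M" "y \<in> ?M"
    then obtain g h where "x - op_poly sc g H w \<in> U" "y - op_poly sc h H w \<in> U" by blast
    hence "(x - op_poly sc g H w) + (y - op_poly sc h H w) \<in> U" using subspace_add[OF U_sub'] by blast
    hence "x + y - op_poly sc (g + h) H w \<in> U" by (simp add: op_poly_add algebra_simps)
    thus "x + y \<in> ?M" by blast
  next
    fix k x assume "x \<in> ?M"
    then obtain g where "x - op_poly sc g H w \<in> U" by blast
    hence "sc k (x - op_poly sc g H w) \<in> U" using subspace_scale[OF U_sub'] by blast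
    hence "sc k x - op_poly sc (smult k g) H w \<in> U" by (simp add: op_poly_smult scale_right_diff_distrib)
    thus "sc k x \<in> ?M" by blast
  qed
  moreover have "\<forall>x\<in>?M. E x \<in> ?M"
  proof
    fix x assume "x \<in> ?M"
    then obtain g where g: "x - op_poly sc g H w \<in> U" by blast
    hence "E (x - op_poly sc g H w) \<in> U" using U_sub unfolding submodule_def by blast
    hence "E x - op_poly sc (smult c (pcompose g [:-1, 1:])) H w \<in> U"
      by (simp add: lin_diff[OF linE] E_gw op_poly_smult)
    thus "E x \<in> ?M" by blast
  qed
  moreover have "\<forall>x\<in>?M. F x \<in> ?M"
  proof
    fix x assume "x \<in> ?M"
    then obtain g where g: "x - op_poly sc g H w \<in> U" by blast
    hence a: "F (x - op_poly sc g H w) \<in> U" using U_sub unfolding submodule_def by blast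
    have b: "op_poly sc g (\<lambda>y. H y + y) (F w - op_poly sc rr H w) \<in> U"
      by (rule op_poly_closed[OF U_sub' HU linHp Fw])
    have "F x - op_poly sc (pcompose g [:1,1:] * rr) H w
        = F (x - op_poly sc g H w) + op_poly sc g (\<lambda>y. H y + y) (F w - op_poly sc rr H w)"
      by (simp add: op_poly_mult[OF linH] G_eq[of g] lin_diff[OF linF] F_poly
            lin_diff[OF op_poly_lin[OF linHp]])
    hence "F x - op_poly sc (pcompose g [:1,1:] * rr) H w \<in> U"
      using a b subspace_add[OF U_sub'] by simp
    thus "F x \<in> ?M" by blast
  qed
  moreover have "\<forall>x\<in>?M. H x \<in> ?M"
  proof
    fix x assume "x \<in> ?M"
    then obtain g where g: "x - op_poly sc g H w \<in> U" by blast
    hence "H (x - op_poly sc g H w) \<in> U" using U_sub unfolding submodule_def by blast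
    moreover have "op_poly sc (pCons 0 g) H w = H (op_poly sc g H w)"
      by (simp add: op_poly_pCons[OF linH])
    ultimately have "H x - op_poly sc (pCons 0 g) H w \<in> U"
      by (simp add: lin_diff[OF linH])
    thus "H x \<in> ?M" by blast
  qed
  ultimately have "submodule sc E F H ?M" by (simp add: submodule_def)
  moreover have "w \<in> ?M" using subspace_0[OF U_sub'] by (auto intro: exI[of _ 1])
  ultimately have "?M = UNIV" using gen by blast
  thus ?thesis by blast
qed

lemma simple: assumes S: "submodule sc E F H S" and US: "U \<subseteq> S" and ne: "S \<noteq> U"
  shows "w \<in> S"
proof -
  have ss: "subspace S" using S by (simp add: submodule_def)
  have "\<exists>v. v \<in> S \<and> v \<notin> U"
  proof (rule ccontr)
    assume "\<not> (\<exists>v. v \<in> S \<and> v \<notin> U)"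
    hence "S \<subseteq> U" by blast
    thus False using US ne by (simp add: subset_antisym)
  qed
  then obtain v where v: "v \<in> S" "v \<notin> U" by blast
  obtain g where g: "v - op_poly sc g H w \<in> U" using Cmod by blast
  have gS: "op_poly sc g H w \<in> S"
  proof -
    have "v - op_poly sc g H w \<in> S" using g US by (rule subsetD[rotated])
    hence "v - (v - op_poly sc g H w) \<in> S" by (rule subspace_diff[OF ss v(1)])
    thus ?thesis by simp
  qed
  have "op_poly sc g H w \<notin> U"
  proof
    assume "op_poly sc g H w \<in> U"
    hence "(v - op_poly sc g H w) + op_poly sc g H w \<in> U" using g subspace_add[OF U_sub'] by blast
    thus False using v by simp
  qed
  hence gnz: "g \<noteq> 0" using subspace_0[OF U_sub'] by auto
  let ?J = "{q. op_poly sc q H w \<in> S}"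
  have d: "\<And>q1 q2. q1 \<in> ?J \<Longrightarrow> q2 \<in> ?J \<Longrightarrow> q1 - q2 \<in> ?J"
    using ss by (simp add: op_poly_diff subspace_diff)
  have sh: "pcompose q [:-1, 1:] \<in> ?J" if "q \<in> ?J" for q
  proof -
    have "E (op_poly sc q H w) \<in> S" using S that unfolding submodule_def by blast
    hence "sc (1/c) (E (op_poly sc q H w)) \<in> S" using subspace_scale[OF ss] by blast
    thus "pcompose q [:-1, 1:] \<in> ?J" using cnz by (simp add: E_gw)
  qed
  have "g \<in> ?J" using gS by simp
  from shift_closed_const[of ?J g, OF d sh this gnz]
  have "\<exists>a. a \<noteq> 0 \<and> [:a:] \<in> ?J" .
  then obtain a where a: "a \<noteq> 0" "[:a:] \<in> ?J" by blast
  hence "sc a w \<in> S" by simp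
  hence "sc (1/a) (sc a w) \<in> S" by (rule subspace_scale[OF ss])
  moreover have "sc (1/a) (sc a w) = w" using a(1) by simp
  ultimately show ?thesis by simp
qed

end


context wm2 begin
lemma key: assumes W: "submodule sc E F H W" and Wn: "W \<noteq> UNIV" shows "W \<subseteq> U"
proof -
  have ws: "subspace W" using W by (simp add: submodule_def)
  let ?S = "{x + y | x y. x \<in> W \<and> y \<in> U}"
  have WS: "W \<subseteq> ?S"
  proof
    fix x assume "x \<in> W"
    moreover have "x = x + 0" by simp
    ultimately show "x \<in> ?S" using subspace_0[OF U_sub'] by blast
  qed
  have US: "U \<subseteq> ?S"
  proof
    fix y assume "y \<in> U"
    moreover have "y = 0 + y" by simp
    ultimately show "y \<in> ?S" using subspace_0[OF ws] by blast
  qed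
  have "subspace ?S"
    unfolding subspace_def
  proof (intro conjI ballI allI)
    show "0 \<in> ?S" using WS subspace_0[OF ws] by blast
    fix a b assume "a \<in> ?S" "b \<in> ?S"
    then obtain x y x' y' where "a = x + y" "b = x' + y'" "x \<in> W" "y \<in> U" "x' \<in> W" "y' \<in> U" by blast
    moreover have "a + b = (x + x') + (y + y')" using calculation by (simp add: algebra_simps)
    ultimately show "a + b \<in> ?S" using subspace_add[OF ws] subspace_add[OF U_sub'] by blast
  next
    fix k a assume "a \<in> ?S"
    then obtain x y where "a = x + y" "x \<in> W" "y \<in> U" by blast
    moreover have "sc k a = sc k x + sc k y" using calculation by (simp add: scale_right_distrib)
    ultimately show "sc k a \<in> ?S" using subspace_scale[OF ws] subspace_scale[OF U_sub'] by blast
  qed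
  moreover have "\<forall>a\<in>?S. E a \<in> ?S" "\<forall>a\<in>?S. F a \<in> ?S" "\<forall>a\<in>?S. H a \<in> ?S"
  proof -
    have *: "\<And>K. lin sc K \<Longrightarrow> (\<forall>x\<in>W. K x \<in> W) \<Longrightarrow> (\<forall>y\<in>U. K y \<in> U) \<Longrightarrow> \<forall>a\<in>?S. K a \<in> ?S"
    proof (intro ballI)
      fix K a assume K: "lin sc K" "\<forall>x\<in>W. K x \<in> W" "\<forall>y\<in>U. K y \<in> U" and a: "a \<in> ?S"
      then obtain x y where xy: "a = x + y" "x \<in> W" "y \<in> U" by blast
      hence "K a = K x + K y" using lin_add[OF K(1)] by simp
      moreover have "K x \<in> W" "K y \<in> U" using K xy by auto
      ultimately show "K a \<in> ?S" by blast
    qed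
    show "\<forall>a\<in>?S. E a \<in> ?S" using *[OF linE] W U_sub by (simp add: submodule_def)
    show "\<forall>a\<in>?S. F a \<in> ?S" using *[OF linF] W U_sub by (simp add: submodule_def)
    show "\<forall>a\<in>?S. H a \<in> ?S" using *[OF linH] W U_sub by (simp add: submodule_def)
  qed
  ultimately have Ssub: "submodule sc E F H ?S" by (simp add: submodule_def)
  show ?thesis
  proof (cases "?S = U")
    case True thus ?thesis using WS by simp
  next
    case False
    hence "w \<in> ?S" using simple[OF Ssub US] by blast
    hence SU: "?S = UNIV" using gen[OF Ssub] by blast
    have TkW: "x \<in> W \<Longrightarrow> (T ^^ k) x \<in> W" for k x
      by (induction k) (auto intro: sub_T[OF W])
    have "\<exists>x\<in>W. \<exists>y. v = x + (T ^^ k) y" for k v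
    proof (induction k arbitrary: v)
      case 0 show ?case using subspace_0[OF ws] by (intro bexI[of _ 0]) auto
    next
      case (Suc k)
      obtain x y where xy: "x \<in> W" "v = x + (T ^^ k) y" using Suc by blast
      have "y \<in> ?S" using SU by blast
      then obtain x' y' where "y = x' + T y'" "x' \<in> W" by blast
      hence "(T ^^ k) y = (T ^^ k) x' + (T ^^ Suc k) y'"
        by (simp add: lin_add[OF lin_funpow[OF linT]] funpow_swap1)
      hence "v = (x + (T ^^ k) x') + (T ^^ Suc k) y'" using xy by (simp add: add.assoc)
      moreover have "x + (T ^^ k) x' \<in> W" using subspace_add[OF ws xy(1) TkW[OF \<open>x' \<in> W\<close>]] .
      ultimately show ?case by blast
    qed
    hence "\<forall>v. v \<in> W" using T_pow by (metis add.right_neutral)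
    thus ?thesis using Wn by blast
  qed
qed

lemma main: "maximal_submodule sc E F H W \<longleftrightarrow> W = gen_submodule sc E F H {T w}"
proof
  assume m: "maximal_submodule sc E F H W"
  hence "W \<subseteq> U" using key by (simp add: maximal_submodule_def)
  hence "U = W \<or> U = UNIV" using m U_sub by (simp add: maximal_submodule_def)
  thus "W = gen_submodule sc E F H {T w}" using U_ne gen_T by auto
next
  assume "W = gen_submodule sc E F H {T w}"
  hence W: "W = U" using gen_T by simp
  show "maximal_submodule sc E F H W"
    unfolding maximal_submodule_def W using U_sub U_ne key by blast
qed

end



theorem mainTheorem12:
  fixes sc :: "complex \<Rightarrow> 'v::ab_group_add \<Rightarrow> 'v"
    and f u p :: "complex poly" and E F H :: "'v \<Rightarrow> 'v" and c :: complex and w :: 'v and n :: nat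
  assumes "R_module sc f E F H"
    and "f = smult (1/2) (pcompose u [:1, 1:] - u)"
    and "c \<noteq> 0"
    and "whittaker_module sc E F H c w"
    and "irreducible p" and "n \<ge> 1"
    and "Z_V sc u E F H = {q. p ^ n dvd q}"
  shows "\<forall>W. maximal_submodule sc E F H W \<longleftrightarrow>
           W = gen_submodule sc E F H {op_poly sc p (Omega_op sc u E F H) w}"
proof -
  note R = assms(1)[unfolded R_module_def]
  have vs: "vector_space sc" using R by blast
  interpret cvs sc using vs by (simp add: cvs_def)
  have mh: "module_hom sc sc E" "module_hom sc sc F" "module_hom sc sc H"
    using R module_hom_iff_linear by blast+
  have lins: "lin sc E" "lin sc F" "lin sc H"
    unfolding lin_def using module_hom.add[OF mh(1)] module_hom.scale[OF mh(1)]
      module_hom.add[OF mh(2)] module_hom.scale[OF mh(2)]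
      module_hom.add[OF mh(3)] module_hom.scale[OF mh(3)] by blast+
  have EF: "\<And>v. E (F v) = F (E v) + op_poly sc f H v"
    using R by (metis add.commute diff_eq_eq)
  have HE: "\<And>v. H (E v) = E (H v) + E v"
    using R by (metis add.commute diff_eq_eq)
  have HF: "\<And>v. H (F v) = F (H v) - F v"
    using R by (metis add.commute diff_eq_eq diff_conv_add_uminus)
  have Ew: "E w = sc c w" using assms(4) by (simp add: whittaker_module_def)
  have gen: "\<And>S. submodule sc E F H S \<Longrightarrow> w \<in> S \<Longrightarrow> S = UNIV"
    using assms(4) unfolding whittaker_module_def gen_submodule_def by blast
  obtain z r where zr: "r \<noteq> 0" "p = [:-z, 1:] * [:r:]" using irreducible_linear[OF assms(5)] by blast
  have pn: "p ^ n \<in> Z_V sc u E F H" using assms(7) by simp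
  hence nil: "\<And>v. op_poly sc (p ^ n) (Omega_op sc u E F H) v = 0" by (simp add: Z_V_def)
  have nontriv: "\<exists>v. sc 1 v \<noteq> 0"
  proof (rule ccontr)
    assume "\<not> (\<exists>v. sc 1 v \<noteq> 0)"
    hence "1 \<in> Z_V sc u E F H" by (simp add: Z_V_def)
    hence "p ^ n dvd 1" using assms(7) by simp
    hence "is_unit p" using assms(6) by (simp add: is_unit_power_iff)
    thus False using assms(5) by (simp add: irreducible_def)
  qed
  have W2: "wm2 sc f u E F H c w p n z r"
    unfolding wm2_def wm2_axioms_def wm_def wm_axioms_def
    using vs lins EF HE HF assms(2,3) Ew gen zr nil nontriv by (simp add: cvs_def)
  interpret wm2 sc f u E F H c w p n z r by (rule W2)
  show ?thesis using main by blast
qed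



end
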